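(* Let $\mu$ be a positive Borel measure on $\mathbb H^m$, and let $r_1,\dots,r_m>n$ and $\tau_1,\dots,\tau_m>0$. Then $\mu$ is an $(r_1,\dots,r_m)$-Carleson measure if and only if $$\|\mu\|^\ast_{(r_1,\dots,r_m)}=\sup_{w_1,\dots,w_m\in\mathbb H}\int_{\mathbb H_{w_1}}\cdots\int_{\mathbb H_{w_m}}\prod_{j=1}^m\frac{s_j^{\tau_j}}{|z_j-\overline w_j|^{r_j+\tau_j}}\,d\mu(z_1,\dots,z_m)<\infty,$$ where $w_j=(y_j,s_j)$ and $\mathbb H_{w_j}=\{(x,t)\in\mathbb H: t\le3s_j\}$. Moreover, $\|\mu\|_{(r_1,\dots,r_m)}\asymp\|\mu\|^\ast_{(r_1,\dots,r_m)}$.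
   Context: $\mathbb H=\{(x,t): x\in\mathbb R^n,\ t>0\}\subset\mathbb R^{n+1}$, and $\overline w=(y,-s)$ for $w=(y,s)$. For $w=(y,s)\in\mathbb H$, $Q_w$ is the cube with sides parallel to the axes, centered at $w$, with side length $s$. A positive Borel measure $\mu$ on $\mathbb H^m$ is an $(r_1,\dots,r_m)$-Carleson measure ($r_j>0$) if $$\|\mu\|_{(r_1,\dots,r_m)}=\sup_{w_1,\dots,w_m\in\mathbb H}\frac{\mu(Q_{w_1}\times\cdots\times Q_{w_m})}{s_1^{r_1}\cdots s_m^{r_m}}<\infty,\qquad w_j=(y_j,s_j).$$ *)

theory Defs
  imports "HOL-Analysis.Analysis"
begin

text \<open>Points of R^{n+1} are pairs (x,t) with x :: real^'n, t :: real; the dimension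
  n is CARD('n). Points of (R^{n+1})^m are vectors indexed by a finite type 'm (m = CARD('m)).\<close>

type_synonym 'n pt = "(real ^ 'n) \<times> real"

definition upper_half :: "'n::finite pt set" where
  "upper_half = {(x, t). t > 0}"

definition conj_pt :: "'n::finite pt \<Rightarrow> 'n pt" where
  "conj_pt w = (fst w, - snd w)"

definition cube :: "'n::finite pt \<Rightarrow> 'n pt set" where
  "cube w = {(x, t). (\<forall>i. \<bar>x $ i - fst w $ i\<bar> \<le> snd w / 2) \<and> \<bar>t - snd w\<bar> \<le> snd w / 2}"

definition Hw :: "'n::finite pt \<Rightarrow> 'n pt set" where
  "Hw w = {(x, t). 0 < t \<and> t \<le> 3 * snd w}"

definition upper_half_prod :: "('n::finite pt ^ 'm::finite) set" where
  "upper_half_prod = {z. \<forall>j. z $ j \<in> upper_half}"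

definition borel_measure_on_Hm :: "('n::finite pt ^ 'm::finite) measure \<Rightarrow> bool" where
  "borel_measure_on_Hm \<mu> \<longleftrightarrow> sets \<mu> = sets borel \<and> emeasure \<mu> (UNIV - upper_half_prod) = 0"

definition carleson_norm ::
  "('m::finite \<Rightarrow> real) \<Rightarrow> ('n::finite pt ^ 'm) measure \<Rightarrow> ennreal" where
  "carleson_norm r \<mu> =
     (SUP w \<in> upper_half_prod.
        emeasure \<mu> {z. \<forall>j. z $ j \<in> cube (w $ j)} / (\<Prod>j\<in>UNIV. ennreal (snd (w $ j) powr r j)))"

definition carleson_star_norm ::
  "('m::finite \<Rightarrow> real) \<Rightarrow> ('m \<Rightarrow> real) \<Rightarrow> ('n::finite pt ^ 'm) measure \<Rightarrow> ennreal" where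
  "carleson_star_norm r \<tau> \<mu> =
     (SUP w \<in> upper_half_prod.
        \<integral>\<^sup>+ z \<in> {z. \<forall>j. z $ j \<in> Hw (w $ j)}.
          ennreal (\<Prod>j\<in>UNIV. snd (w $ j) powr \<tau> j
                      / norm (z $ j - conj_pt (w $ j)) powr (r j + \<tau> j)) \<partial>\<mu>)"

end

theory Submission
  imports Defs "HOL-Library.Nat_Bijection"
begin

lemma nn_prod_sum:
  fixes f :: "'a::finite \<Rightarrow> 'b::countable \<Rightarrow> ennreal"
  shows "(\<integral>\<^sup>+\<kappa>. (\<Prod>j\<in>UNIV. f j (\<kappa> j)) \<partial>count_space UNIV) = (\<Prod>j\<in>UNIV. \<integral>\<^sup>+k. f j k \<partial>count_space UNIV)"
proof -
  interpret product_sigma_finite "\<lambda>_::'a. count_space (UNIV::'b set)"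
    by (intro product_sigma_finite.intro sigma_finite_measure_count_space_countable) auto
  have "PiM UNIV (\<lambda>_::'a. count_space (UNIV::'b set)) = count_space (PiE UNIV (\<lambda>_. UNIV))"
    by (rule count_space_PiM_finite) auto
  moreover have "PiE (UNIV::'a set) (\<lambda>_. UNIV::'b set) = UNIV" by (auto simp: PiE_def extensional_def)
  ultimately show ?thesis using product_nn_integral_prod[of UNIV f] by simp
qed

lemma nn_sum_ge_term:
  fixes f :: "'b \<Rightarrow> ennreal"
  shows "f a \<le> (\<integral>\<^sup>+k. f k \<partial>count_space UNIV)"
proof -
  have "(\<integral>\<^sup>+k. f a * indicator {a} k \<partial>count_space UNIV) = f a"
    by (subst nn_integral_cmult_indicator) auto
  moreover have "(\<integral>\<^sup>+k. f a * indicator {a} k \<partial>count_space UNIV) \<le> (\<integral>\<^sup>+k. f k \<partial>count_space UNIV)"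
    by (intro nn_integral_mono) (auto simp: indicator_def)
  ultimately show ?thesis by simp
qed

lemma nn_sum_pair:
  fixes f :: "('a::countable \<times> 'b::countable) \<Rightarrow> ennreal"
  shows "(\<integral>\<^sup>+x. f x \<partial>count_space UNIV) = (\<integral>\<^sup>+u. \<integral>\<^sup>+v. f (u,v) \<partial>count_space UNIV \<partial>count_space UNIV)"
by (rule nn_integral_fst_count_space[symmetric])

lemma summable_Z: "q > 1 \<Longrightarrow> summable (\<lambda>j. real (Suc j) powr (-q))"
proof -
  assume q: "q > 1"
  have "summable (\<lambda>n. real n powr (-q))" using q by (subst summable_real_powr_iff) simp
  then show ?thesis by (subst summable_Suc_iff)
qed

lemma Z_nonneg: "q > 1 \<Longrightarrow> 0 \<le> (\<Sum>j. real (Suc j) powr (-q))"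
  by (intro suminf_nonneg summable_Z) auto

lemma one_dim:
  fixes q :: real and M :: nat
  assumes q: "q > 1" and M: "M \<ge> 1"
  shows "(\<integral>\<^sup>+k. ennreal (max (real M) (real k + 1) powr (-q)) \<partial>count_space UNIV)
          \<le> ennreal (2 powr q * (\<Sum>j. real (Suc j) powr (-q)) * real M powr (1-q))"
proof -
  define \<phi> where "\<phi> k = max (real M) (real k + 1) powr (-q)" for k :: nat
  define Z where "Z j = real (Suc j) powr (-q)" for j :: nat
  have sZ: "summable Z"
  proof -
    have "summable (\<lambda>n. real n powr (-q))" using q by (subst summable_real_powr_iff) simp
    then show ?thesis unfolding Z_def by (subst summable_Suc_iff)
  qed
  have \<phi>Z: "\<phi> k \<le> Z k" for k
    unfolding \<phi>_def Z_def by (rule powr_mono2') (use q in auto)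
  have \<phi>nn: "0 \<le> \<phi> k" for k unfolding \<phi>_def by simp
  have s\<phi>: "summable \<phi>"
    by (rule summable_comparison_test'[OF sZ, of 0]) (use \<phi>Z \<phi>nn in auto)
  have trm: "\<phi> k \<le> 2 powr q * real M powr (-q) * Z j" if "k \<in> {j*M..<j*M+M}" for j k
  proof -
    have Mp: "real M > 0" using M by simp
    have "real M * (real j + 1) / 2 \<le> max (real M) (real k + 1)"
    proof (cases "j = 0")
      case True then show ?thesis using Mp by (simp add: max_def)
    next
      case False
      have "real (j*M) \<le> real k" using that by (simp only: of_nat_le_iff atLeastLessThan_iff)
      then have "real j * real M \<le> real k" by simp
      moreover have "real M * (real j + 1) / 2 \<le> real j * real M"
        using False Mp by (simp add: field_simps)
      ultimately have "real M * (real j + 1) / 2 \<le> real k + 1" by linarith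
      then show ?thesis using max.cobounded2[of "real M" "real k + 1"] by linarith
    qed
    then have "\<phi> k \<le> (real M * (real j + 1) / 2) powr (-q)"
      unfolding \<phi>_def by (intro powr_mono2') (use q Mp in auto)
    also have "\<dots> = 2 powr q * real M powr (-q) * Z j"
      unfolding Z_def using Mp
      by (simp add: powr_divide powr_mult powr_minus divide_simps add.commute)
    finally show ?thesis .
  qed
  have block: "(\<Sum>k\<in>{j*M..<j*M+M}. \<phi> k) \<le> 2 powr q * real M powr (1-q) * Z j" for j
  proof -
    have "(\<Sum>k\<in>{j*M..<j*M+M}. \<phi> k) \<le> (\<Sum>k\<in>{j*M..<j*M+M}. 2 powr q * real M powr (-q) * Z j)"
      by (rule sum_mono) (rule trm)
    also have "\<dots> = real M * (2 powr q * real M powr (-q) * Z j)" by simp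
    also have "\<dots> = 2 powr q * real M powr (1-q) * Z j"
      using M by (simp add: powr_diff powr_minus divide_simps)
    finally show ?thesis .
  qed
  have "(\<lambda>j. \<Sum>k\<in>{j*M..<j*M+M}. \<phi> k) sums (suminf \<phi>)"
    by (rule sums_group) (use s\<phi> M in auto)
  moreover have "(\<lambda>j. 2 powr q * real M powr (1-q) * Z j) sums (2 powr q * real M powr (1-q) * suminf Z)"
    using sZ by (intro sums_mult summable_sums)
  ultimately have le: "suminf \<phi> \<le> 2 powr q * real M powr (1-q) * suminf Z"
    by (rule sums_le[where f="\<lambda>j. \<Sum>k\<in>{j*M..<j*M+M}. \<phi> k", OF block])
  have "(\<integral>\<^sup>+k. ennreal (\<phi> k) \<partial>count_space UNIV) = ennreal (suminf \<phi>)"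
    by (simp add: nn_integral_count_space_nat suminf_ennreal2 \<phi>nn s\<phi>)
  also have "\<dots> \<le> ennreal (2 powr q * (\<Sum>j. Z j) * real M powr (1-q))"
    using le by (intro ennreal_leI) (simp add: mult_ac)
  finally show ?thesis unfolding \<phi>_def Z_def .
qed

lemma int_encode_le: "real (int_encode K) \<le> 2 * \<bar>real_of_int K\<bar>"
  by (cases "0 \<le> K") (auto simp: int_encode_def sum_encode_def of_nat_nat)

lemma int_encode_0: "int_encode 0 = 0"
  by (simp add: int_encode_def sum_encode_def)

definition hh :: "real \<Rightarrow> nat \<Rightarrow> real" where "hh s i = 2 * s / 2 ^ i"

definition ctr :: "'n::finite pt \<Rightarrow> nat \<Rightarrow> ('n \<Rightarrow> nat) \<Rightarrow> 'n pt" where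
  "ctr w i k = ((\<chi> l. fst w $ l + hh (snd w) i * real_of_int (int_decode (k l))), hh (snd w) i)"

definition coef :: "real \<Rightarrow> real \<Rightarrow> 'n::finite pt \<Rightarrow> nat \<Rightarrow> ('n \<Rightarrow> nat) \<Rightarrow> real" where
  "coef q tt w i k = snd w powr tt *
     (\<Prod>l\<in>UNIV. (hh (snd w) i * max (2^(i+2)) (real (k l) + 1) / 8) powr (-q))"

lemma exists_layer:
  fixes s t :: real
  assumes "0 < s" "0 < t" "t \<le> 3 * s"
  shows "\<exists>i::nat. s / 2^i \<le> t \<and> t \<le> 3 * s / 2^i"
proof -
  obtain N :: nat where N: "s / t < 2 ^ N" using real_arch_pow[of 2 "s/t"] by auto
  have ex: "\<exists>i::nat. s / 2^i \<le> t"
  proof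
    show "s / 2^N \<le> t" using N assms by (simp add: field_simps)
  qed
  define i where "i = (LEAST i::nat. s / 2^i \<le> t)"
  have i1: "s / 2^i \<le> t" unfolding i_def by (rule LeastI_ex[OF ex])
  have "t \<le> 3 * s / 2^i"
  proof (cases i)
    case 0 then show ?thesis using assms by simp
  next
    case (Suc i')
    have "\<not> s / 2^i' \<le> t" using not_less_Least[of i' "\<lambda>i. s / 2^i \<le> t"] Suc unfolding i_def by auto
    then have "t < s / 2^i'" by simp
    also have "\<dots> \<le> 3 * s / 2^i" using Suc assms by (simp add: field_simps)
    finally show ?thesis by simp
  qed
  with i1 show ?thesis by blast
qed

lemma cover:
  fixes w z :: "'n::finite pt"
  assumes s: "snd w > 0" and q: "q > 0" and z: "z \<in> Hw w"
  shows "\<exists>i k. z \<in> cube (ctr w i k) \<and>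
     snd w powr tt / norm (z - conj_pt w) powr (q * real CARD('n)) \<le> coef q tt w i k"
proof -
  obtain y s' where w: "w = (y, s')" by (cases w)
  obtain x t where zz: "z = (x, t)" by (cases z)
  define s where "s = s'"
  have sp: "s > 0" using s w s_def by simp
  have t: "0 < t" "t \<le> 3 * s" using z zz w s_def by (auto simp: Hw_def)
  obtain i :: nat where i: "s / 2^i \<le> t" "t \<le> 3 * s / 2^i" using exists_layer[OF sp t] by blast
  define h where "h = hh s i"
  have h2: "h / 2 = s / 2^i" unfolding h_def hh_def by simp
  have hp: "h > 0" unfolding h_def hh_def using sp by simp
  have hs: "h * 2^(i+2) / 8 = s" unfolding h_def hh_def by (simp add: power_add)
  define K where "K l = round ((x $ l - y $ l) / h)" for l
  define k where "k l = int_encode (K l)" for l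
  have dk: "int_decode (k l) = K l" for l unfolding k_def by simp
  have Kl: "\<bar>x $ l - (y $ l + h * real_of_int (K l))\<bar> \<le> h / 2" for l
  proof -
    have "\<bar>real_of_int (K l) - (x $ l - y $ l) / h\<bar> \<le> 1/2"
      unfolding K_def by (rule of_int_round_abs_le)
    then have "h * \<bar>real_of_int (K l) - (x $ l - y $ l) / h\<bar> \<le> h * (1/2)"
      using hp by (intro mult_left_mono) auto
    moreover have "h * (real_of_int (K l) - (x $ l - y $ l) / h) = h * real_of_int (K l) - (x $ l - y $ l)"
      using hp by (simp add: field_simps)
    moreover have "h * \<bar>real_of_int (K l) - (x $ l - y $ l) / h\<bar> = \<bar>h * (real_of_int (K l) - (x $ l - y $ l) / h)\<bar>"
      using hp by (simp add: abs_mult)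
    ultimately have "\<bar>h * real_of_int (K l) - (x $ l - y $ l)\<bar> \<le> h / 2" by simp
    then show ?thesis by linarith
  qed
  have tc: "\<bar>t - h\<bar> \<le> h / 2" using i h2 by linarith
  have incube: "z \<in> cube (ctr w i k)"
    unfolding cube_def ctr_def zz w using Kl tc
    by (simp add: dk h_def[symmetric] s_def[symmetric])
  define D where "D = norm (z - conj_pt w)"
  have Deq: "z - conj_pt w = (x - y, t + s)" unfolding zz w conj_pt_def s_def by simp
  have Ds: "s \<le> D"
  proof -
    have "norm (t + s) \<le> D" unfolding D_def Deq by (rule norm_snd_le)
    then show ?thesis using t sp by simp
  qed
  have Dx: "\<bar>x $ l - y $ l\<bar> \<le> D" for l
  proof -
    have "\<bar>(x - y) $ l\<bar> \<le> norm (x - y)" by (rule component_le_norm_cart)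
    also have "\<dots> \<le> D" unfolding D_def Deq by (rule norm_fst_le)
    finally show ?thesis by simp
  qed
  have Dp: "D > 0" using Ds sp by simp
  have dl: "h * max (2^(i+2)) (real (k l) + 1) / 8 \<le> D" for l
  proof (cases "K l = 0")
    case True
    then have "k l = 0" unfolding k_def by (simp add: int_encode_0)
    moreover have "(1::real) \<le> 2^(i+2)" by (rule one_le_power) simp
    ultimately have "max (2^(i+2)) (real (k l) + 1) = 2^(i+2)" by (simp only: max_def) simp
    then show ?thesis using hs Ds by simp
  next
    case False
    then have K1: "1 \<le> \<bar>real_of_int (K l)\<bar>" by linarith
    have "real (k l) + 1 \<le> 2 * \<bar>real_of_int (K l)\<bar> + 1" unfolding k_def using int_encode_le by simp
    then have "h * (real (k l) + 1) / 8 \<le> h * (2 * \<bar>real_of_int (K l)\<bar> + 1) / 8"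
      using hp by (simp add: divide_right_mono)
    also have "\<dots> \<le> h * \<bar>real_of_int (K l)\<bar> - h / 2" using K1 hp by (simp add: field_simps)
    also have "\<dots> \<le> \<bar>x $ l - y $ l\<bar>"
    proof -
      have "\<bar>h * real_of_int (K l)\<bar> \<le> \<bar>x $ l - y $ l\<bar> + h/2" using Kl[of l] by linarith
      then show ?thesis using hp by (simp add: abs_mult)
    qed
    also have "\<dots> \<le> D" by (rule Dx)
    finally have a: "h * (real (k l) + 1) / 8 \<le> D" .
    show ?thesis using a hs Ds by (cases "2^(i+2) \<le> real (k l) + 1") (auto simp: max_def)
  qed
  have dlp: "0 < h * max (2^(i+2)) (real (k l) + 1) / 8" for l
    using hp by (simp add: max_def)
  have "s powr tt / D powr (q * real CARD('n)) = s powr tt * (\<Prod>l\<in>(UNIV::'n set). D powr (-q))"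
  proof -
    have "(D powr q) ^ CARD('n) = D powr (real CARD('n) * q)" using Dp by (simp add: powr_power)
    then show ?thesis using Dp by (simp add: powr_minus divide_inverse power_inverse mult_ac)
  qed
  also have "\<dots> \<le> s powr tt * (\<Prod>l\<in>UNIV. (h * max (2^(i+2)) (real (k l) + 1) / 8) powr (-q))"
    by (intro mult_left_mono prod_mono conjI powr_mono2' dl dlp) (use q in auto)
  also have "\<dots> = coef q tt w i k" unfolding coef_def w h_def s_def by simp
  finally show ?thesis using incube unfolding D_def w s_def by auto
qed

lemma T_alg:
  fixes s q tt r B :: real and n i :: nat
  assumes s: "s > 0" and qn: "q * real n = r + tt"
  shows "s powr tt * (2 * s / 2^i) powr r * ((2 * s / 2^i / 8) powr (-q) * B * (2^(i+2)) powr (1-q)) ^ n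
         = B ^ n * 2 powr (r + 2 * real n) * (2 powr (real n - r)) ^ i"
proof -
  have h: "2 * s / 2^i = s * 2 powr (1 - real i)" by (simp add: powr_diff powr_realpow)
  have p2: "(2::real)^(i+2) = 2 powr (real i + 2)"
    using powr_realpow[of 2 "i+2"] by (simp add: add.commute)
  have h8: "2 * s / 2^i / 8 = s * 2 powr (- (real i + 2))"
    unfolding powr_minus p2[symmetric] by (simp add: divide_simps)
  have "((2 * s / 2^i / 8) powr (-q) * B * (2^(i+2)) powr (1-q)) ^ n
      = B ^ n * ((2 * s / 2^i / 8) powr (-q)) ^ n * ((2^(i+2)) powr (1-q)) ^ n"
    by (simp add: power_mult_distrib)
  also have "((2 * s / 2^i / 8) powr (-q)) ^ n = (2 * s / 2^i / 8) powr (- (r + tt))"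
    using s by (simp add: powr_power qn[symmetric] mult_ac)
  also have "(((2::real)^(i+2)) powr (1-q)) ^ n = 2 powr ((real i + 2) * (real n - (r + tt)))"
  proof -
    have "(((2::real)^(i+2)) powr (1-q)) ^ n = (2 powr ((real i + 2) * (1 - q))) ^ n"
      unfolding p2 by (simp add: powr_powr)
    also have "\<dots> = 2 powr (real n * ((real i + 2) * (1 - q)))" by (simp add: powr_power)
    also have "real n * ((real i + 2) * (1 - q)) = (real i + 2) * (real n - q * real n)"
      by (simp add: algebra_simps)
    finally show ?thesis by (simp add: qn)
  qed
  finally have e: "((2 * s / 2^i / 8) powr (-q) * B * (2^(i+2)) powr (1-q)) ^ n
      = B ^ n * (2 * s / 2^i / 8) powr (- (r + tt)) * 2 powr ((real i + 2) * (real n - (r + tt)))" .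
  have a1: "(2 * s / 2^i) powr r = s powr r * 2 powr ((1 - real i) * r)"
    unfolding h using s by (simp add: powr_mult powr_powr)
  have a2: "(2 * s / 2^i / 8) powr (- (r + tt)) = s powr (- (r + tt)) * 2 powr ((real i + 2) * (r + tt))"
  proof -
    have "(- real i - 2) * (- r - tt) = (real i + 2) * (r + tt)" by (simp add: algebra_simps)
    then show ?thesis unfolding h8 using s by (simp add: powr_mult powr_powr)
  qed
  have a3: "(2 powr (real n - r)) ^ i = 2 powr (real i * (real n - r))"
    by (simp add: powr_power)
  have ss: "s powr tt * s powr r * s powr (- (r + tt)) = 1"
    using s by (simp add: powr_add[symmetric])
  have tw: "2 powr ((1 - real i) * r) * 2 powr ((real i + 2) * (r + tt)) * 2 powr ((real i + 2) * (real n - (r + tt)))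
      = (2::real) powr (r + 2 * real n) * 2 powr (real i * (real n - r))"
    by (simp add: powr_add[symmetric] algebra_simps)
  have "s powr tt * (2 * s / 2^i) powr r * ((2 * s / 2^i / 8) powr (-q) * B * (2^(i+2)) powr (1-q)) ^ n
      = B ^ n * (s powr tt * s powr r * s powr (- (r + tt))) *
        (2 powr ((1 - real i) * r) * 2 powr ((real i + 2) * (r + tt)) * 2 powr ((real i + 2) * (real n - (r + tt))))"
    unfolding e a1 a2 by (simp add: mult_ac)
  also have "\<dots> = B ^ n * 2 powr (r + 2 * real n) * (2 powr (real n - r)) ^ i"
    unfolding ss tw a3 by simp
  finally show ?thesis .
qed

lemma step_i:
  fixes w :: "'n::finite pt"
  assumes s: "snd w > 0" and q: "q > 1" and qn: "q * real CARD('n) = r + tt"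
  shows "(\<integral>\<^sup>+k. ennreal (coef q tt w i k * hh (snd w) i powr r) \<partial>count_space (UNIV :: ('n \<Rightarrow> nat) set))
     \<le> ennreal ((2 powr q * (\<Sum>j. real (Suc j) powr (-q))) ^ CARD('n) * 2 powr (r + 2 * real CARD('n))
          * (2 powr (real CARD('n) - r)) ^ i)"
proof -
  define S where "S = snd w"
  define h where "h = hh S i"
  define B where "B = 2 powr q * (\<Sum>j. real (Suc j) powr (-q))"
  define M :: nat where "M = 2^(i+2)"
  have hp: "h > 0" using s unfolding h_def hh_def S_def by simp
  have rM: "real M = 2^(i+2)" unfolding M_def by simp
  define f where "f n = (h * max (2^(i+2)) (real n + 1) / 8) powr (-q)" for n :: nat
  define c where "c = S powr tt * h powr r"
  have cnn: "0 \<le> c" unfolding c_def by simp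
  have feq: "f n = (h / 8) powr (-q) * max (real M) (real n + 1) powr (-q)" for n
  proof -
    have ee: "h * max (2^(i+2)) (real n + 1) / 8 = (h / 8) * max (real M) (real n + 1)" using rM by simp
    have "f n = ((h/8) * max (real M) (real n + 1)) powr (-q)" unfolding f_def by (simp only: ee)
    also have "\<dots> = (h / 8) powr (-q) * max (real M) (real n + 1) powr (-q)"
      by (rule powr_mult)
    finally show ?thesis .
  qed
  have fint: "(\<integral>\<^sup>+n. ennreal (f n) \<partial>count_space UNIV) \<le> ennreal ((h / 8) powr (-q) * B * (2^(i+2)) powr (1-q))"
  proof -
    have "(\<integral>\<^sup>+n. ennreal (f n) \<partial>count_space UNIV)
        = (\<integral>\<^sup>+n. ennreal ((h / 8) powr (-q)) * ennreal (max (real M) (real n + 1) powr (-q)) \<partial>count_space UNIV)"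
      unfolding feq by (simp add: ennreal_mult)
    also have "\<dots> = ennreal ((h / 8) powr (-q)) * (\<integral>\<^sup>+n. ennreal (max (real M) (real n + 1) powr (-q)) \<partial>count_space UNIV)"
      by (rule nn_integral_cmult) simp
    also have "\<dots> \<le> ennreal ((h / 8) powr (-q)) * ennreal (B * real M powr (1-q))"
      by (intro mult_left_mono) (use one_dim[OF q, of M] in \<open>auto simp: M_def B_def\<close>)
    also have "\<dots> = ennreal ((h / 8) powr (-q) * B * (2^(i+2)) powr (1-q))"
      using Z_nonneg[OF q] by (simp add: ennreal_mult[symmetric] rM mult_ac B_def)
    finally show ?thesis .
  qed
  have "(\<integral>\<^sup>+k. ennreal (coef q tt w i k * hh (snd w) i powr r) \<partial>count_space (UNIV :: ('n \<Rightarrow> nat) set))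
      = (\<integral>\<^sup>+k. ennreal c * (\<Prod>l\<in>(UNIV::'n set). ennreal (f (k l))) \<partial>count_space UNIV)"
  proof (rule nn_integral_cong)
    fix k :: "'n \<Rightarrow> nat"
    have P: "0 \<le> (\<Prod>l\<in>UNIV. f (k l))" unfolding f_def by (intro prod_nonneg) auto
    have "coef q tt w i k * hh (snd w) i powr r = c * (\<Prod>l\<in>UNIV. f (k l))"
      unfolding coef_def c_def f_def S_def[symmetric] h_def[symmetric] by (simp add: mult_ac)
    then show "ennreal (coef q tt w i k * hh (snd w) i powr r) = ennreal c * (\<Prod>l\<in>UNIV. ennreal (f (k l)))"
      using P cnn by (simp add: ennreal_mult prod_ennreal f_def)
  qed
  also have "\<dots> = ennreal c * (\<Prod>l\<in>(UNIV::'n set). \<integral>\<^sup>+n. ennreal (f n) \<partial>count_space UNIV)"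
    by (simp add: nn_integral_cmult nn_prod_sum[of "\<lambda>l n. ennreal (f n)"])
  also have "\<dots> \<le> ennreal c * (\<Prod>l\<in>(UNIV::'n set). ennreal ((h / 8) powr (-q) * B * (2^(i+2)) powr (1-q)))"
    using fint by (simp add: mult_left_mono power_mono)
  also have "\<dots> = ennreal (c * ((h / 8) powr (-q) * B * (2^(i+2)) powr (1-q)) ^ CARD('n))"
  proof -
    have Xnn: "0 \<le> (h / 8) powr (-q) * B * (2^(i+2)) powr (1-q)"
      using Z_nonneg[OF q] unfolding B_def by simp
    then show ?thesis using cnn by (simp add: ennreal_power ennreal_mult[symmetric])
  qed
  also have "c * ((h / 8) powr (-q) * B * (2^(i+2)) powr (1-q)) ^ CARD('n)
      = B ^ CARD('n) * 2 powr (r + 2 * real CARD('n)) * (2 powr (real CARD('n) - r)) ^ i"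
    unfolding c_def h_def hh_def using T_alg[where s=S and B=B and i=i and n="CARD('n)" and q=q and r=r and tt=tt] qn s S_def by simp
  finally show ?thesis unfolding B_def .
qed

definition Cone :: "real \<Rightarrow> real \<Rightarrow> nat \<Rightarrow> real" where
  "Cone q r n = (2 powr q * (\<Sum>j. real (Suc j) powr (-q))) ^ n * 2 powr (r + 2 * real n)
      / (1 - 2 powr (real n - r))"

lemma sum_one:
  fixes w :: "'n::finite pt"
  assumes s: "snd w > 0" and q: "q > 1" and qn: "q * real CARD('n) = r + tt" and rn: "real CARD('n) < r"
  shows "(\<integral>\<^sup>+\<iota>. ennreal (coef q tt w (fst \<iota>) (snd \<iota>) * hh (snd w) (fst \<iota>) powr r)
           \<partial>count_space (UNIV :: (nat \<times> ('n \<Rightarrow> nat)) set)) \<le> ennreal (Cone q r CARD('n))"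
proof -
  define E where "E = (2 powr q * (\<Sum>j. real (Suc j) powr (-q))) ^ CARD('n) * 2 powr (r + 2 * real CARD('n))"
  define \<rho> where "\<rho> = (2::real) powr (real CARD('n) - r)"
  have \<rho>1: "\<rho> < 1" unfolding \<rho>_def using rn by (intro powr_less_one) auto
  have \<rho>0: "0 \<le> \<rho>" unfolding \<rho>_def by simp
  have E0: "0 \<le> E" unfolding E_def using Z_nonneg[OF q] by simp
  have sg: "summable (\<lambda>i. E * \<rho> ^ i)" using \<rho>0 \<rho>1 by (intro summable_mult summable_geometric) simp
  have "(\<integral>\<^sup>+\<iota>. ennreal (coef q tt w (fst \<iota>) (snd \<iota>) * hh (snd w) (fst \<iota>) powr r)
           \<partial>count_space (UNIV :: (nat \<times> ('n \<Rightarrow> nat)) set))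
      = (\<integral>\<^sup>+i. \<integral>\<^sup>+k. ennreal (coef q tt w i k * hh (snd w) i powr r) \<partial>count_space (UNIV :: ('n \<Rightarrow> nat) set) \<partial>count_space UNIV)"
    by (subst nn_sum_pair) simp
  also have "\<dots> \<le> (\<integral>\<^sup>+i. ennreal (E * \<rho> ^ i) \<partial>count_space UNIV)"
    by (intro nn_integral_mono) (use step_i[OF s q qn] in \<open>simp add: E_def \<rho>_def\<close>)
  also have "\<dots> = ennreal (\<Sum>i. E * \<rho> ^ i)"
    using sg E0 \<rho>0 by (simp add: nn_integral_count_space_nat suminf_ennreal2)
  also have "(\<Sum>i. E * \<rho> ^ i) = E / (1 - \<rho>)"
    using \<rho>0 \<rho>1 by (simp add: suminf_mult suminf_geometric summable_geometric divide_inverse)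
  also have "E / (1 - \<rho>) = Cone q r CARD('n)" unfolding Cone_def E_def \<rho>_def by simp
  finally show ?thesis .
qed

lemma mem_cube: "z \<in> cube u \<longleftrightarrow> (\<forall>i. \<bar>fst z $ i - fst u $ i\<bar> \<le> snd u / 2) \<and> \<bar>snd z - snd u\<bar> \<le> snd u / 2"
  by (cases z) (simp add: cube_def)

lemma closed_prodcube: "closed {z :: ('n::finite pt)^'m::finite. \<forall>j. z $ j \<in> cube (u j)}"
proof -
  have e: "{z :: ('n::finite pt)^'m::finite. \<forall>j. z $ j \<in> cube (u j)} =
    {z. \<forall>j. (\<forall>i. \<bar>fst (z $ j) $ i - fst (u j) $ i\<bar> \<le> snd (u j) / 2) \<and> \<bar>snd (z $ j) - snd (u j)\<bar> \<le> snd (u j) / 2}"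
    by (simp only: mem_cube)
  show ?thesis unfolding e
    by (intro closed_Collect_all closed_Collect_conj closed_Collect_le continuous_intros)
qed

lemma prod_mono_ennreal:
  fixes f g :: "'a \<Rightarrow> ennreal"
  shows "(\<And>i. i \<in> A \<Longrightarrow> f i \<le> g i) \<Longrightarrow> prod f A \<le> prod g A"
  by (induct A rule: infinite_finite_induct) (auto intro!: mult_mono)

lemma in_upper_half: "w \<in> upper_half \<longleftrightarrow> snd w > 0"
  by (cases w) (simp add: upper_half_def)

lemma cube_facts:
  fixes w z :: "'n::finite pt"
  assumes s: "snd w > 0" and z: "z \<in> cube w"
  shows "z \<in> Hw w" "norm (z - conj_pt w) \<le> (real CARD('n) + 3) * snd w" "0 < norm (z - conj_pt w)"
proof -
  obtain y s' where w: "w = (y, s')" by (cases w)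
  obtain x t where zz: "z = (x, t)" by (cases z)
  have sp: "s' > 0" using s w by simp
  have c: "\<And>i. \<bar>x $ i - y $ i\<bar> \<le> s' / 2" "\<bar>t - s'\<bar> \<le> s' / 2" using z unfolding mem_cube w zz by auto
  have "t - s' \<le> s'/2 \<and> -(t - s') \<le> s'/2" using c(2) by (simp only: abs_le_iff)
  then have t: "s' / 2 \<le> t" "t \<le> 3 * s' / 2" by linarith+
  show "z \<in> Hw w" unfolding zz w Hw_def using t sp by simp
  have Deq: "z - conj_pt w = (x - y, t + s')" unfolding zz w conj_pt_def by simp
  have "norm (x - y) \<le> (\<Sum>i\<in>UNIV. \<bar>(x - y) $ i\<bar>)" by (rule norm_le_l1_cart)
  also have "\<dots> \<le> real CARD('n) * (s' / 2)"
    using sum_bounded_above[of UNIV "\<lambda>i. \<bar>(x - y) $ i\<bar>" "s'/2"] c by simp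
  finally have nx: "norm (x - y) \<le> real CARD('n) * (s' / 2)" .
  have "norm (z - conj_pt w) \<le> norm (x - y) + norm (t + s')" unfolding Deq by (rule norm_Pair_le)
  also have "\<dots> \<le> real CARD('n) * (s' / 2) + 5 * s' / 2" using nx t sp by simp
  also have "\<dots> \<le> (real CARD('n) + 3) * snd w" using sp w by (simp add: field_simps)
  finally show "norm (z - conj_pt w) \<le> (real CARD('n) + 3) * snd w" .
  have "0 < norm (t + s')" using t sp by simp
  also have "\<dots> \<le> norm (z - conj_pt w)" unfolding Deq by (rule norm_snd_le)
  finally show "0 < norm (z - conj_pt w)" .
qed

lemma lower_val:
  fixes s D A r tt :: real
  assumes s: "s > 0" and D: "0 < D" "D \<le> A * s" and A: "A > 0" and rt: "r + tt > 0"
  shows "A powr (- (r + tt)) * s powr (- r) \<le> s powr tt / D powr (r + tt)"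
proof -
  have "D powr (r + tt) \<le> (A * s) powr (r + tt)" using D rt by (intro powr_mono2) auto
  then have "s powr tt / (A * s) powr (r + tt) \<le> s powr tt / D powr (r + tt)"
    using D A s by (intro divide_left_mono) auto
  moreover have "s powr tt / (A * s) powr (r + tt) = A powr (- (r + tt)) * s powr (- r)"
  proof -
    have "s powr tt / (A * s) powr (r + tt) = (1 / A powr (r + tt)) * (s powr tt / s powr (r + tt))"
      by (simp add: powr_mult)
    also have "\<dots> = A powr (- (r + tt)) * s powr (tt - (r + tt))"
      by (simp only: powr_minus_divide powr_diff)
    also have "\<dots> = A powr (- (r + tt)) * s powr (- r)"
      by (rule arg_cong[where f="\<lambda>e. A powr (- (r + tt)) * s powr e"]) simp
    finally show ?thesis .
  qed
  ultimately show ?thesis by simp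
qed

lemma sets_prodcube:
  fixes \<mu> :: "('n::finite pt ^ 'm::finite) measure"
  assumes "sets \<mu> = sets borel"
  shows "{z. \<forall>j. z $ j \<in> cube (u j)} \<in> sets \<mu>"
  by (simp add: assms borel_closed[OF closed_prodcube])

lemma div_ennreal_eq: "0 < p \<Longrightarrow> a / ennreal p = ennreal (1 / p) * a"
  by (simp add: divide_ennreal_def inverse_ennreal mult.commute inverse_eq_divide)

lemma partA:
  fixes r \<tau> :: "'m::finite \<Rightarrow> real" and \<mu> :: "('n::finite pt ^ 'm) measure"
  assumes r: "\<And>j. r j > real CARD('n)" and \<tau>: "\<And>j. \<tau> j > 0" and \<mu>: "sets \<mu> = sets borel"
  shows "carleson_norm r \<mu> \<le> ennreal (\<Prod>j\<in>UNIV. (real CARD('n) + 3) powr (r j + \<tau> j)) * carleson_star_norm r \<tau> \<mu>"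
proof -
  define A where "A = real CARD('n) + 3"
  have A: "A > 0" unfolding A_def by simp
  define C1 where "C1 = (\<Prod>j\<in>(UNIV::'m set). A powr (r j + \<tau> j))"
  define I where "I w = (\<integral>\<^sup>+ z \<in> {z. \<forall>j. z $ j \<in> Hw (w $ j)}.
          ennreal (\<Prod>j\<in>UNIV. snd (w $ j) powr \<tau> j
                      / norm (z $ j - conj_pt (w $ j)) powr (r j + \<tau> j)) \<partial>\<mu>)" for w :: "'n pt ^ 'm"
  have rt: "r j + \<tau> j > 0" for j using r[of j] \<tau>[of j] by linarith
  have key: "emeasure \<mu> {z. \<forall>j. z $ j \<in> cube (w $ j)} / (\<Prod>j\<in>UNIV. ennreal (snd (w $ j) powr r j))
             \<le> ennreal C1 * I w" if w: "w \<in> upper_half_prod" for w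
  proof -
    define s where "s j = snd (w $ j)" for j
    have sp: "s j > 0" for j using w unfolding upper_half_prod_def s_def by (simp add: in_upper_half)
    define Q where "Q = {z. \<forall>j. z $ j \<in> cube (w $ j)}"
    define H where "H = {z. \<forall>j. z $ j \<in> Hw (w $ j)}"
    have Qm: "Q \<in> sets \<mu>" unfolding Q_def by (rule sets_prodcube[OF \<mu>])
    define cw where "cw = (\<Prod>j\<in>UNIV. A powr (- (r j + \<tau> j)) * s j powr (- r j))"
    have pt: "ennreal cw * indicator Q z \<le> ennreal (\<Prod>j\<in>UNIV. snd (w $ j) powr \<tau> j
                      / norm (z $ j - conj_pt (w $ j)) powr (r j + \<tau> j)) * indicator H z" for z
    proof (cases "z \<in> Q")
      case True
      then have zc: "z $ j \<in> cube (w $ j)" for j unfolding Q_def by auto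
      have "z \<in> H" unfolding H_def using cube_facts(1)[OF _ zc] sp s_def by auto
      moreover have "cw \<le> (\<Prod>j\<in>UNIV. snd (w $ j) powr \<tau> j / norm (z $ j - conj_pt (w $ j)) powr (r j + \<tau> j))"
        unfolding cw_def
      proof (intro prod_mono conjI)
        fix j
        show "0 \<le> A powr (- (r j + \<tau> j)) * s j powr (- r j)" by simp
        show "A powr (- (r j + \<tau> j)) * s j powr (- r j) \<le> snd (w $ j) powr \<tau> j / norm (z $ j - conj_pt (w $ j)) powr (r j + \<tau> j)"
          unfolding s_def
          by (rule lower_val) (use cube_facts(2,3)[OF _ zc] sp s_def A rt A_def in auto)
      qed
      ultimately show ?thesis using True by (simp add: ennreal_leI)
    next
      case False then show ?thesis by simp
    qed
    have "ennreal cw * emeasure \<mu> Q = (\<integral>\<^sup>+z. ennreal cw * indicator Q z \<partial>\<mu>)"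
      using Qm by (simp add: nn_integral_cmult_indicator)
    also have "\<dots> \<le> I w" unfolding I_def H_def[symmetric] by (intro nn_integral_mono pt)
    finally have le1: "ennreal cw * emeasure \<mu> Q \<le> I w" .
    have Pp: "0 < (\<Prod>j\<in>UNIV. s j powr r j)" using sp by (intro prod_pos) (simp add: less_imp_neq[symmetric])
    have P: "(\<Prod>j\<in>UNIV. ennreal (snd (w $ j) powr r j)) = ennreal (\<Prod>j\<in>UNIV. s j powr r j)"
      unfolding s_def by (simp add: prod_ennreal)
    have C1cw: "C1 * cw = 1 / (\<Prod>j\<in>UNIV. s j powr r j)"
    proof -
      have "C1 * cw = (\<Prod>j\<in>UNIV. A powr (r j + \<tau> j) * (A powr (- (r j + \<tau> j)) * s j powr (- r j)))"
        unfolding C1_def cw_def by (simp add: prod.distrib)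
      also have "\<dots> = (\<Prod>j\<in>UNIV. 1 / s j powr r j)"
        using A by (intro prod.cong refl) (simp add: powr_minus field_simps powr_add[symmetric])
      also have "\<dots> = 1 / (\<Prod>j\<in>UNIV. s j powr r j)" by (simp add: prod_dividef)
      finally show ?thesis .
    qed
    have C1p: "0 \<le> C1" unfolding C1_def by (intro prod_nonneg) simp
    have cwp: "0 \<le> cw" unfolding cw_def by (intro prod_nonneg) simp
    have "emeasure \<mu> Q / (\<Prod>j\<in>UNIV. ennreal (snd (w $ j) powr r j)) = ennreal (C1 * cw) * emeasure \<mu> Q"
      unfolding P C1cw by (rule div_ennreal_eq[OF Pp])
    also have "\<dots> = ennreal C1 * (ennreal cw * emeasure \<mu> Q)" using C1p cwp by (simp add: ennreal_mult mult.assoc)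
    also have "\<dots> \<le> ennreal C1 * I w" by (intro mult_left_mono le1) simp
    finally show ?thesis unfolding Q_def .
  qed
  have "carleson_norm r \<mu> \<le> ennreal C1 * (SUP w\<in>upper_half_prod. I w)"
    unfolding carleson_norm_def
  proof (rule SUP_least)
    fix w :: "'n pt ^ 'm" assume w: "w \<in> upper_half_prod"
    have "ennreal C1 * I w \<le> ennreal C1 * (SUP w\<in>upper_half_prod. I w)"
      by (intro mult_left_mono SUP_upper w) simp
    with key[OF w] show "emeasure \<mu> {z. \<forall>j. z $ j \<in> cube (w $ j)} / (\<Prod>j\<in>UNIV. ennreal (snd (w $ j) powr r j))
        \<le> ennreal C1 * (SUP w\<in>upper_half_prod. I w)" by (rule order.trans)
  qed
  then show ?thesis unfolding carleson_star_norm_def I_def C1_def A_def .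
qed

lemma carl_bound:
  fixes \<mu> :: "('n::finite pt ^ 'm::finite) measure"
  assumes u: "u \<in> upper_half_prod"
  shows "emeasure \<mu> {z. \<forall>j. z $ j \<in> cube (u $ j)} \<le> carleson_norm r \<mu> * (\<Prod>j\<in>UNIV. ennreal (snd (u $ j) powr r j))"
proof -
  have sp: "snd (u $ j) > 0" for j using u unfolding upper_half_prod_def by (simp add: in_upper_half)
  define Pr where "Pr = (\<Prod>j\<in>UNIV. snd (u $ j) powr r j)"
  have Pp: "0 < Pr" unfolding Pr_def using sp by (intro prod_pos) (simp add: less_imp_neq[symmetric])
  have P: "(\<Prod>j\<in>UNIV. ennreal (snd (u $ j) powr r j)) = ennreal Pr"
    unfolding Pr_def by (simp add: prod_ennreal)
  define X where "X = emeasure \<mu> {z. \<forall>j. z $ j \<in> cube (u $ j)}"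
  have "X / ennreal Pr \<le> carleson_norm r \<mu>"
    unfolding carleson_norm_def X_def P[symmetric] by (rule SUP_upper[OF u])
  then have "X / ennreal Pr * ennreal Pr \<le> carleson_norm r \<mu> * ennreal Pr"
    by (rule mult_right_mono) simp
  moreover have "X / ennreal Pr * ennreal Pr = X"
  proof -
    have "X / ennreal Pr * ennreal Pr = X * (ennreal (1 / Pr) * ennreal Pr)"
      unfolding div_ennreal_eq[OF Pp] by (simp add: mult_ac)
    also have "ennreal (1 / Pr) * ennreal Pr = 1" using Pp by (simp add: ennreal_mult[symmetric])
    finally show ?thesis by simp
  qed
  ultimately show ?thesis unfolding X_def P by simp
qed

lemma coef_nonneg: "0 \<le> coef q tt w i k"
  unfolding coef_def by (intro mult_nonneg_nonneg prod_nonneg) auto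

lemma Cone_nonneg:
  assumes "q > 1" "real n < r"
  shows "0 \<le> Cone q r n"
proof -
  have "2 powr (real n - r) < 1" using assms by (intro powr_less_one) auto
  then show ?thesis unfolding Cone_def using Z_nonneg[OF assms(1)] by simp
qed

lemma partB:
  fixes r \<tau> :: "'m::finite \<Rightarrow> real" and \<mu> :: "('n::finite pt ^ 'm) measure"
  assumes r: "\<And>j. r j > real CARD('n)" and \<tau>: "\<And>j. \<tau> j > 0" and \<mu>: "sets \<mu> = sets borel"
  shows "carleson_star_norm r \<tau> \<mu> \<le>
           ennreal (\<Prod>j\<in>UNIV. Cone ((r j + \<tau> j) / real CARD('n)) (r j) CARD('n)) * carleson_norm r \<mu>"
proof -
  define q where "q j = (r j + \<tau> j) / real CARD('n)" for j
  have qn: "q j * real CARD('n) = r j + \<tau> j" for j unfolding q_def by simp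
  have q1: "q j > 1" for j
  proof -
    have "real CARD('n) < q j * real CARD('n)" using qn[of j] r[of j] \<tau>[of j] by linarith
    then show ?thesis by simp
  qed
  define C2 where "C2 = (\<Prod>j\<in>(UNIV::'m set). Cone (q j) (r j) CARD('n))"
  define carl where "carl = carleson_norm r \<mu>"
  define I where "I w = (\<integral>\<^sup>+ z \<in> {z. \<forall>j. z $ j \<in> Hw (w $ j)}.
          ennreal (\<Prod>j\<in>UNIV. snd (w $ j) powr \<tau> j
                      / norm (z $ j - conj_pt (w $ j)) powr (r j + \<tau> j)) \<partial>\<mu>)" for w :: "'n pt ^ 'm"
  have key: "I w \<le> ennreal C2 * carl" if w: "w \<in> upper_half_prod" for w
  proof -
    have sp: "snd (w $ j) > 0" for j using w unfolding upper_half_prod_def by (simp add: in_upper_half)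
    define cc where "cc j \<iota> = coef (q j) (\<tau> j) (w $ j) (fst \<iota>) (snd \<iota>)" for j and \<iota> :: "nat \<times> ('n \<Rightarrow> nat)"
    define ce where "ce j \<iota> = ctr (w $ j) (fst \<iota>) (snd \<iota>)" for j and \<iota> :: "nat \<times> ('n \<Rightarrow> nat)"
    define hj where "hj j \<iota> = hh (snd (w $ j)) (fst \<iota>)" for j and \<iota> :: "nat \<times> ('n \<Rightarrow> nat)"
    define Qk where "Qk \<kappa> = {z. \<forall>j. z $ j \<in> cube (ce j (\<kappa> j))}" for \<kappa> :: "'m \<Rightarrow> nat \<times> ('n \<Rightarrow> nat)"
    define F where "F \<kappa> z = ennreal (\<Prod>j\<in>UNIV. cc j (\<kappa> j)) * indicator (Qk \<kappa>) z"
      for \<kappa> :: "'m \<Rightarrow> nat \<times> ('n \<Rightarrow> nat)" and z :: "'n pt ^ 'm"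
    define H where "H = {z. \<forall>j. z $ j \<in> Hw (w $ j)}"
    define G where "G z = ennreal (\<Prod>j\<in>UNIV. snd (w $ j) powr \<tau> j
                      / norm (z $ j - conj_pt (w $ j)) powr (r j + \<tau> j))" for z :: "'n pt ^ 'm"
    have Qm[measurable]: "Qk \<kappa> \<in> sets \<mu>" for \<kappa> unfolding Qk_def by (rule sets_prodcube[OF \<mu>])
    have hjp: "hj j \<iota> > 0" for j \<iota> unfolding hj_def hh_def using sp[of j] by simp
    have pt: "G z * indicator H z \<le> (\<integral>\<^sup>+\<kappa>. F \<kappa> z \<partial>count_space UNIV)" for z
    proof (cases "z \<in> H")
      case True
      have "\<forall>j. \<exists>\<iota>. z $ j \<in> cube (ce j \<iota>) \<and>
          snd (w $ j) powr \<tau> j / norm (z $ j - conj_pt (w $ j)) powr (r j + \<tau> j) \<le> cc j \<iota>"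
      proof
        fix j
        have "z $ j \<in> Hw (w $ j)" using True unfolding H_def by auto
        from cover[OF sp[of j] _ this, of "q j" "\<tau> j"] q1[of j]
        obtain i k where "z $ j \<in> cube (ctr (w $ j) i k)"
          "snd (w $ j) powr \<tau> j / norm (z $ j - conj_pt (w $ j)) powr (q j * real CARD('n)) \<le> coef (q j) (\<tau> j) (w $ j) i k"
          by auto
        then show "\<exists>\<iota>. z $ j \<in> cube (ce j \<iota>) \<and>
          snd (w $ j) powr \<tau> j / norm (z $ j - conj_pt (w $ j)) powr (r j + \<tau> j) \<le> cc j \<iota>"
          by (intro exI[of _ "(i, k)"]) (simp add: ce_def cc_def qn)
      qed
      then obtain \<kappa>0 where k0: "\<And>j. z $ j \<in> cube (ce j (\<kappa>0 j))"
        "\<And>j. snd (w $ j) powr \<tau> j / norm (z $ j - conj_pt (w $ j)) powr (r j + \<tau> j) \<le> cc j (\<kappa>0 j)"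
        by metis
      have "z \<in> Qk \<kappa>0" unfolding Qk_def using k0(1) by simp
      then have "G z * indicator H z \<le> F \<kappa>0 z"
        unfolding G_def F_def using True
        by (simp add: ennreal_leI prod_mono k0(2))
      also have "\<dots> \<le> (\<integral>\<^sup>+\<kappa>. F \<kappa> z \<partial>count_space UNIV)" by (rule nn_sum_ge_term)
      finally show ?thesis .
    next
      case False then show ?thesis by simp
    qed
    have "I w = (\<integral>\<^sup>+z. G z * indicator H z \<partial>\<mu>)" unfolding I_def G_def H_def by simp
    also have "\<dots> \<le> (\<integral>\<^sup>+z. \<integral>\<^sup>+\<kappa>. F \<kappa> z \<partial>count_space UNIV \<partial>\<mu>)" by (intro nn_integral_mono pt)
    also have "\<dots> = (\<integral>\<^sup>+\<kappa>. \<integral>\<^sup>+z. F \<kappa> z \<partial>\<mu> \<partial>count_space UNIV)"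
      by (rule nn_integral_count_space_nn_integral) (auto simp: F_def)
    also have "\<dots> = (\<integral>\<^sup>+\<kappa>. ennreal (\<Prod>j\<in>UNIV. cc j (\<kappa> j)) * emeasure \<mu> (Qk \<kappa>) \<partial>count_space UNIV)"
      unfolding F_def by (intro nn_integral_cong nn_integral_cmult_indicator Qm)
    also have "\<dots> \<le> (\<integral>\<^sup>+\<kappa>. ennreal (\<Prod>j\<in>UNIV. cc j (\<kappa> j)) * (carl * (\<Prod>j\<in>UNIV. ennreal (hj j (\<kappa> j) powr r j))) \<partial>count_space UNIV)"
    proof (intro nn_integral_mono mult_left_mono)
      fix \<kappa> :: "'m \<Rightarrow> nat \<times> ('n \<Rightarrow> nat)"
      define u where "u = (\<chi> j. ce j (\<kappa> j))"
      have u: "u \<in> upper_half_prod" unfolding upper_half_prod_def u_def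
        using hjp by (simp add: in_upper_half ce_def ctr_def hj_def)
      have "emeasure \<mu> (Qk \<kappa>) = emeasure \<mu> {z. \<forall>j. z $ j \<in> cube (u $ j)}" unfolding Qk_def u_def by simp
      also have "\<dots> \<le> carl * (\<Prod>j\<in>UNIV. ennreal (snd (u $ j) powr r j))"
        unfolding carl_def by (rule carl_bound[OF u])
      also have "(\<Prod>j\<in>UNIV. ennreal (snd (u $ j) powr r j)) = (\<Prod>j\<in>UNIV. ennreal (hj j (\<kappa> j) powr r j))"
        unfolding u_def by (simp add: ce_def ctr_def hj_def)
      finally show "emeasure \<mu> (Qk \<kappa>) \<le> carl * (\<Prod>j\<in>UNIV. ennreal (hj j (\<kappa> j) powr r j))" .
    qed simp
    also have "\<dots> = (\<integral>\<^sup>+\<kappa>. carl * (\<Prod>j\<in>UNIV. ennreal (cc j (\<kappa> j) * hj j (\<kappa> j) powr r j)) \<partial>count_space UNIV)"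
    proof (rule nn_integral_cong)
      fix \<kappa> :: "'m \<Rightarrow> nat \<times> ('n \<Rightarrow> nat)"
      have c0: "0 \<le> cc j (\<kappa> j)" for j unfolding cc_def by (rule coef_nonneg)
      have "(\<Prod>j\<in>UNIV. ennreal (cc j (\<kappa> j) * hj j (\<kappa> j) powr r j))
          = (\<Prod>j\<in>UNIV. ennreal (cc j (\<kappa> j))) * (\<Prod>j\<in>UNIV. ennreal (hj j (\<kappa> j) powr r j))"
        using c0 by (simp add: ennreal_mult prod.distrib)
      moreover have "(\<Prod>j\<in>UNIV. ennreal (cc j (\<kappa> j))) = ennreal (\<Prod>j\<in>UNIV. cc j (\<kappa> j))"
        using c0 by (simp add: prod_ennreal)
      ultimately show "ennreal (\<Prod>j\<in>UNIV. cc j (\<kappa> j)) * (carl * (\<Prod>j\<in>UNIV. ennreal (hj j (\<kappa> j) powr r j)))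
          = carl * (\<Prod>j\<in>UNIV. ennreal (cc j (\<kappa> j) * hj j (\<kappa> j) powr r j))"
        by (simp add: mult_ac)
    qed
    also have "\<dots> = carl * (\<Prod>j\<in>UNIV. \<integral>\<^sup>+\<iota>. ennreal (cc j \<iota> * hj j \<iota> powr r j) \<partial>count_space UNIV)"
      using nn_prod_sum[of "\<lambda>j \<iota>. ennreal (cc j \<iota> * hj j \<iota> powr r j)"] by (simp add: nn_integral_cmult)
    also have "\<dots> \<le> carl * (\<Prod>j\<in>UNIV. ennreal (Cone (q j) (r j) CARD('n)))"
    proof (intro mult_left_mono prod_mono_ennreal)
      fix j :: 'm
      show "(\<integral>\<^sup>+\<iota>. ennreal (cc j \<iota> * hj j \<iota> powr r j) \<partial>count_space UNIV) \<le> ennreal (Cone (q j) (r j) CARD('n))"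
        unfolding cc_def hj_def by (rule sum_one[OF sp q1 qn r])
    qed simp
    also have "\<dots> = ennreal C2 * carl"
      unfolding C2_def using Cone_nonneg[OF q1 r] by (simp add: prod_ennreal mult.commute)
    finally show ?thesis .
  qed
  have "carleson_star_norm r \<tau> \<mu> \<le> ennreal C2 * carl"
    unfolding carleson_star_norm_def I_def[symmetric] by (rule SUP_least) (rule key)
  then show ?thesis unfolding C2_def q_def carl_def .
qed

theorem mainTheorem9:
  fixes r \<tau> :: "'m::finite \<Rightarrow> real"
  assumes "\<And>j. r j > real CARD('n::finite)"
      and "\<And>j. \<tau> j > 0"
  shows "\<exists>C>0. \<forall>\<mu> :: ('n pt ^ 'm) measure. borel_measure_on_Hm \<mu> \<longrightarrow>
           ((carleson_norm r \<mu> < \<infinity> \<longleftrightarrow> carleson_star_norm r \<tau> \<mu> < \<infinity>)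
            \<and> carleson_norm r \<mu> \<le> ennreal C * carleson_star_norm r \<tau> \<mu>
            \<and> carleson_star_norm r \<tau> \<mu> \<le> ennreal C * carleson_norm r \<mu>)"
proof -
  define C1 where "C1 = (\<Prod>j\<in>(UNIV::'m set). (real CARD('n) + 3) powr (r j + \<tau> j))"
  define C2 where "C2 = (\<Prod>j\<in>(UNIV::'m set). Cone ((r j + \<tau> j) / real CARD('n)) (r j) CARD('n))"
  define C where "C = max 1 (max C1 C2)"
  have Cp: "C > 0" unfolding C_def by simp
  have ll: "\<forall>\<mu> :: ('n pt ^ 'm) measure. borel_measure_on_Hm \<mu> \<longrightarrow>
           ((carleson_norm r \<mu> < \<infinity> \<longleftrightarrow> carleson_star_norm r \<tau> \<mu> < \<infinity>)
            \<and> carleson_norm r \<mu> \<le> ennreal C * carleson_star_norm r \<tau> \<mu>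
            \<and> carleson_star_norm r \<tau> \<mu> \<le> ennreal C * carleson_norm r \<mu>)"
  proof (intro allI impI)
    fix \<mu> :: "('n pt ^ 'm) measure"
    assume "borel_measure_on_Hm \<mu>"
    then have \<mu>: "sets \<mu> = sets borel" unfolding borel_measure_on_Hm_def by simp
    have a: "carleson_norm r \<mu> \<le> ennreal C * carleson_star_norm r \<tau> \<mu>"
    proof -
      have "carleson_norm r \<mu> \<le> ennreal C1 * carleson_star_norm r \<tau> \<mu>"
        unfolding C1_def by (rule partA[OF assms \<mu>])
      also have "\<dots> \<le> ennreal C * carleson_star_norm r \<tau> \<mu>"
        by (intro mult_right_mono ennreal_leI) (auto simp: C_def)
      finally show ?thesis .
    qed
    have b: "carleson_star_norm r \<tau> \<mu> \<le> ennreal C * carleson_norm r \<mu>"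
    proof -
      have "carleson_star_norm r \<tau> \<mu> \<le> ennreal C2 * carleson_norm r \<mu>"
        unfolding C2_def by (rule partB[OF assms \<mu>])
      also have "\<dots> \<le> ennreal C * carleson_norm r \<mu>"
        by (intro mult_right_mono ennreal_leI) (auto simp: C_def)
      finally show ?thesis .
    qed
    have "carleson_norm r \<mu> < \<infinity> \<longleftrightarrow> carleson_star_norm r \<tau> \<mu> < \<infinity>"
    proof
      assume "carleson_norm r \<mu> < \<infinity>"
      then have "ennreal C * carleson_norm r \<mu> < \<infinity>" by (simp add: ennreal_mult_less_top)
      with b show "carleson_star_norm r \<tau> \<mu> < \<infinity>" by (rule le_less_trans)
    next
      assume "carleson_star_norm r \<tau> \<mu> < \<infinity>"
      then have "ennreal C * carleson_star_norm r \<tau> \<mu> < \<infinity>" by (simp add: ennreal_mult_less_top)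
      with a show "carleson_norm r \<mu> < \<infinity>" by (rule le_less_trans)
    qed
    with a b show "(carleson_norm r \<mu> < \<infinity> \<longleftrightarrow> carleson_star_norm r \<tau> \<mu> < \<infinity>)
            \<and> carleson_norm r \<mu> \<le> ennreal C * carleson_star_norm r \<tau> \<mu>
            \<and> carleson_star_norm r \<tau> \<mu> \<le> ennreal C * carleson_norm r \<mu>" by blast
  qed
  with Cp show ?thesis by blast
qed

end
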